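(* Let $H$ be a digraph (possibly with loops) and let $D$ be an $H$-colored tournament. Then for every $k \geq 3$, $D$ has a $(k,H)$-kernel.
   Context: All digraphs are finite. A tournament is a digraph in which every two distinct vertices are joined by exactly one arc (no loops, no symmetric arcs). $D$ comes with a map $\rho: A(D)\to V(H)$. For a walk $W=(x_0,\ldots,x_n)$ in $D$, there is an obstruction on $x_i$ if $(\rho(x_{i-1},x_i),\rho(x_i,x_{i+1})) \notin A(H)$; for an open walk this is considered at internal vertices $x_i$, $1\le i\le n-1$, for a closed walk at all $i\in\{0,\ldots,n-1\}$ with indices modulo $n$. $O_H(W)$ is the set of indices with an obstruction; the $H$-length is $l_H(W)=|O_H(W)|+1$ for open $W$ and $|O_H(W)|$ for closed $W$. A $(k,H)$-kernel ($k\ge2$) is a set $S\subseteq V(D)$ such that for every two distinct $u,v\in S$ every directed $uv$-path in $D$ has $H$-length at least $k$, and for every $x\in V(D)\setminus S$ there is a directed path from $x$ to a vertex of $S$ of $H$-length at most $k-1$. *)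

theory Defs
  imports Main
begin

definition digraph :: "'a set \<Rightarrow> ('a \<times> 'a) set \<Rightarrow> bool" where
  "digraph V A \<longleftrightarrow> finite V \<and> A \<subseteq> V \<times> V"

definition tournament :: "'a set \<Rightarrow> ('a \<times> 'a) set \<Rightarrow> bool" where
  "tournament V A \<longleftrightarrow> digraph V A \<and> (\<forall>v. (v, v) \<notin> A) \<and>
     (\<forall>u\<in>V. \<forall>v\<in>V. u \<noteq> v \<longrightarrow> ((u, v) \<in> A \<longleftrightarrow> (v, u) \<notin> A))"

definition H_coloring :: "('a \<times> 'a) set \<Rightarrow> 'b set \<Rightarrow> ('a \<times> 'a \<Rightarrow> 'b) \<Rightarrow> bool" where
  "H_coloring AD VH \<rho> \<longleftrightarrow> (\<forall>e\<in>AD. \<rho> e \<in> VH)"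

definition dpath :: "'a set \<Rightarrow> ('a \<times> 'a) set \<Rightarrow> 'a list \<Rightarrow> bool" where
  "dpath V A xs \<longleftrightarrow> xs \<noteq> [] \<and> distinct xs \<and> set xs \<subseteq> V \<and>
     (\<forall>i. Suc i < length xs \<longrightarrow> (xs ! i, xs ! Suc i) \<in> A)"

definition obstructions :: "('b \<times> 'b) set \<Rightarrow> ('a \<times> 'a \<Rightarrow> 'b) \<Rightarrow> 'a list \<Rightarrow> nat set" where
  "obstructions AH \<rho> xs = {i. 1 \<le> i \<and> Suc i < length xs \<and>
      (\<rho> (xs ! (i - 1), xs ! i), \<rho> (xs ! i, xs ! Suc i)) \<notin> AH}"

definition H_length :: "('b \<times> 'b) set \<Rightarrow> ('a \<times> 'a \<Rightarrow> 'b) \<Rightarrow> 'a list \<Rightarrow> nat" where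
  "H_length AH \<rho> xs = card (obstructions AH \<rho> xs) + 1"

definition kH_kernel :: "nat \<Rightarrow> 'a set \<Rightarrow> ('a \<times> 'a) set \<Rightarrow> ('b \<times> 'b) set \<Rightarrow>
    ('a \<times> 'a \<Rightarrow> 'b) \<Rightarrow> 'a set \<Rightarrow> bool" where
  "kH_kernel k V A AH \<rho> S \<longleftrightarrow> S \<subseteq> V \<and>
     (\<forall>u\<in>S. \<forall>v\<in>S. u \<noteq> v \<longrightarrow>
        (\<forall>xs. dpath V A xs \<and> hd xs = u \<and> last xs = v \<longrightarrow> H_length AH \<rho> xs \<ge> k)) \<and>
     (\<forall>x\<in>V - S. \<exists>xs. dpath V A xs \<and> hd xs = x \<and> last xs \<in> S \<and> H_length AH \<rho> xs \<le> k - 1)"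

end

theory Submission
  imports Defs
begin

lemma HL2: "H_length AH \<rho> [x, y] = 1"
  unfolding H_length_def obstructions_def by simp

lemma HL3: "H_length AH \<rho> [x, w, y] \<le> 2"
proof -
  have "obstructions AH \<rho> [x, w, y] \<subseteq> {1}"
    unfolding obstructions_def by auto
  from card_mono[OF _ this] have "card (obstructions AH \<rho> [x, w, y]) \<le> 1"
    by simp
  thus ?thesis unfolding H_length_def by simp
qed

theorem corollary8:
  fixes VD :: "'a set" and AD :: "('a \<times> 'a) set"
    and VH :: "'b set" and AH :: "('b \<times> 'b) set"
    and \<rho> :: "'a \<times> 'a \<Rightarrow> 'b" and k :: nat
  assumes "digraph VH AH"
    and "tournament VD AD"
    and "H_coloring AD VH \<rho>"
    and "k \<ge> 3"
  shows "\<exists>S. kH_kernel k VD AD AH \<rho> S"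
proof (cases "VD = {}")
  case True
  then show ?thesis unfolding kH_kernel_def by auto
next
  case False
  have fin: "finite VD" and sub: "AD \<subseteq> VD \<times> VD" and noloop: "\<And>v. (v, v) \<notin> AD"
    and tour: "\<And>u v. u \<in> VD \<Longrightarrow> v \<in> VD \<Longrightarrow> u \<noteq> v \<Longrightarrow> (u, v) \<in> AD \<longleftrightarrow> (v, u) \<notin> AD"
  proof -
    have T: "digraph VD AD" "\<forall>v. (v, v) \<notin> AD"
      "\<forall>u\<in>VD. \<forall>v\<in>VD. u \<noteq> v \<longrightarrow> ((u, v) \<in> AD \<longleftrightarrow> (v, u) \<notin> AD)"
      using assms(2) unfolding tournament_def by blast+
    show "finite VD" "AD \<subseteq> VD \<times> VD" using T(1) unfolding digraph_def by blast+
    show "\<And>v. (v, v) \<notin> AD" using T(2) by blast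
    show "\<And>u v. u \<in> VD \<Longrightarrow> v \<in> VD \<Longrightarrow> u \<noteq> v \<Longrightarrow> (u, v) \<in> AD \<longleftrightarrow> (v, u) \<notin> AD"
      using T(3) by blast
  qed
  define f where "f v = card {w \<in> VD. (w, v) \<in> AD}" for v
  have "Max (f ` VD) \<in> f ` VD" using fin False by (intro Max_in) auto
  then obtain v where v1: "v \<in> VD" and v2: "f v = Max (f ` VD)" by auto
  have v: "v \<in> VD" "\<And>y. y \<in> VD \<Longrightarrow> f y \<le> f v"
    using v1 apply simp
    unfolding v2 using fin by (intro Max_ge) auto
  have reach: "\<exists>xs. dpath VD AD xs \<and> hd xs = x \<and> last xs \<in> {v} \<and> H_length AH \<rho> xs \<le> k - 1"
    if x: "x \<in> VD - {v}" for x
  proof (cases "(x, v) \<in> AD")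
    case True
    have "dpath VD AD [x, v]" using True x v unfolding dpath_def
      by (auto simp: less_Suc_eq)
    then show ?thesis using HL2[of AH \<rho> x v] assms(4) by (intro exI[of _ "[x, v]"]) auto
  next
    case False
    hence vx: "(v, x) \<in> AD" using tour[of x v] x v by auto
    show ?thesis
    proof (cases "\<exists>w. (x, w) \<in> AD \<and> (w, v) \<in> AD")
      case True
      then obtain w where w: "(x, w) \<in> AD" "(w, v) \<in> AD" by blast
      have "w \<noteq> x" "w \<noteq> v" using w noloop by auto
      moreover have "w \<in> VD" using w sub by auto
      ultimately have "dpath VD AD [x, w, v]" using w x v unfolding dpath_def
        by (auto simp: less_Suc_eq)
      then show ?thesis using HL3[of AH \<rho> x w v] assms(4) by (intro exI[of _ "[x, w, v]"]) auto
    next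
      case nw: False
      have "insert v {w \<in> VD. (w, v) \<in> AD} \<subseteq> {w \<in> VD. (w, x) \<in> AD}"
      proof
        fix w assume "w \<in> insert v {w \<in> VD. (w, v) \<in> AD}"
        then show "w \<in> {w \<in> VD. (w, x) \<in> AD}"
        proof
          assume "w = v" thus ?thesis using vx v by auto
        next
          assume w: "w \<in> {w \<in> VD. (w, v) \<in> AD}"
          hence "w \<noteq> x" using False by auto
          moreover have "(x, w) \<notin> AD" using nw w by auto
          ultimately show ?thesis using tour[of x w] w x by auto
        qed
      qed
      hence "card (insert v {w \<in> VD. (w, v) \<in> AD}) \<le> f x"
        unfolding f_def by (intro card_mono) (use fin in auto)
      moreover have "card (insert v {w \<in> VD. (w, v) \<in> AD}) = f v + 1"
        unfolding f_def using fin noloop by simp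
      ultimately show ?thesis using v(2)[of x] x by simp
    qed
  qed
  have "kH_kernel k VD AD AH \<rho> {v}"
    unfolding kH_kernel_def using v(1) reach by auto
  then show ?thesis by blast
qed

end
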